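(* Let $\Gamma$ be an infinite group generated by a finite set $X$ and let $\pi:\mathbb F_X\to\Gamma$ be the canonical projection. Then $\overline\mu(\ker\pi)=0$; equivalently, $\ker\pi$ is LB-negligible.
   Context: $\mathbb F_X$ is the free group on $X$, $|\omega|$ the reduced word length, $B_n=\{\omega\in\mathbb F_X:|\omega|\le n\}$. For $S\subset\mathbb F_X$, $\overline\mu(S)=\limsup_{n\to\infty}\max_{\omega\in\mathbb F_X}\frac{|S\cap\omega B_n|}{|B_n|}$ and $\underline\mu(S)=\liminf_{n\to\infty}\min_{\omega\in\mathbb F_X}\frac{|S\cap\omega B_n|}{|B_n|}$. A set is LB-generic if $\underline\mu=1$, and $N$ is LB-negligible if its complement is LB-generic, i.e. $\overline\mu(N)=0$. *)

theory Defs
  imports "HOL-Algebra.Generated_Groups" "HOL-Library.Liminf_Limsup" "HOL-Library.Extended_Real"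
begin

text \<open>Free group on a set X of letters: elements are reduced words, i.e. lists of
  signed letters (True, x) = x and (False, x) = x inverse, with no adjacent cancelling pair.\<close>

type_synonym 'a fword = "(bool \<times> 'a) list"

definition cancels :: "bool \<times> 'a \<Rightarrow> bool \<times> 'a \<Rightarrow> bool" where
  "cancels a b \<longleftrightarrow> fst a \<noteq> fst b \<and> snd a = snd b"

fun reduced :: "'a fword \<Rightarrow> bool" where
  "reduced [] = True"
| "reduced [a] = True"
| "reduced (a # b # w) = (\<not> cancels a b \<and> reduced (b # w))"

definition push :: "'a fword \<Rightarrow> bool \<times> 'a \<Rightarrow> 'a fword" where
  "push w a = (if w \<noteq> [] \<and> cancels (last w) a then butlast w else w @ [a])"

definition normalize :: "'a fword \<Rightarrow> 'a fword" where
  "normalize w = foldl push [] w"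

definition fmult :: "'a fword \<Rightarrow> 'a fword \<Rightarrow> 'a fword" where
  "fmult u v = normalize (u @ v)"

definition free_words :: "'a set \<Rightarrow> 'a fword set" where
  "free_words X = {w. reduced w \<and> snd ` set w \<subseteq> X}"

definition fball :: "'a set \<Rightarrow> nat \<Rightarrow> 'a fword set" where
  "fball X n = {w \<in> free_words X. length w \<le> n}"

definition upper_density :: "'a set \<Rightarrow> 'a fword set \<Rightarrow> ereal" where
  "upper_density X S = limsup (\<lambda>n. SUP \<omega>\<in>free_words X.
      ereal (real (card (S \<inter> fmult \<omega> ` fball X n)) / real (card (fball X n))))"

definition proj :: "('a, 'b) monoid_scheme \<Rightarrow> 'a fword \<Rightarrow> 'a" where
  "proj G w = foldr (\<lambda>(b, x) acc. (if b then x else inv\<^bsub>G\<^esub> x) \<otimes>\<^bsub>G\<^esub> acc) w \<one>\<^bsub>G\<^esub>"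

definition proj_kernel :: "('a, 'b) monoid_scheme \<Rightarrow> 'a set \<Rightarrow> 'a fword set" where
  "proj_kernel G X = {w \<in> free_words X. proj G w = \<one>\<^bsub>G\<^esub>}"

end

theory Submission
  imports Defs
begin


definition letters :: "'a set \<Rightarrow> (bool \<times> 'a) set" where
  "letters X = UNIV \<times> X"

definition lett :: "('a,'b) monoid_scheme \<Rightarrow> bool \<times> 'a \<Rightarrow> 'a" where
  "lett G a = (if fst a then snd a else inv\<^bsub>G\<^esub> snd a)"

lemma proj_Nil[simp]: "proj G [] = \<one>\<^bsub>G\<^esub>" by (simp add: proj_def)
lemma proj_Cons[simp]: "proj G (a # w) = lett G a \<otimes>\<^bsub>G\<^esub> proj G w"
  by (cases a) (simp add: proj_def lett_def)

lemma cancels_iff: "cancels a b \<longleftrightarrow> b = (\<not> fst a, snd a)"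
  by (cases a; cases b) (auto simp: cancels_def)

lemma reduced_Cons: "reduced (a # v) \<longleftrightarrow> reduced v \<and> (v = [] \<or> \<not> cancels a (hd v))"
  by (cases v) auto

lemma reduced_snoc: "reduced (xs @ [a]) \<longleftrightarrow> reduced xs \<and> (xs = [] \<or> \<not> cancels (last xs) a)"
  by (induction xs rule: reduced.induct) auto

lemma reduced_butlast: "reduced xs \<Longrightarrow> reduced (butlast xs)"
  by (induction xs rule: reduced.induct) (auto simp: reduced_Cons)

lemma free_words_iff: "w \<in> free_words X \<longleftrightarrow> reduced w \<and> set w \<subseteq> letters X"
  by (auto simp: free_words_def letters_def)

lemma reduced_replicate: "w = [] \<or> hd w = z \<Longrightarrow> reduced w \<Longrightarrow> reduced (replicate r z @ w)"
proof (induction r)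
  case (Suc r)
  have "replicate r z @ w = [] \<or> hd (replicate r z @ w) = z" using Suc.prems by (cases r) auto
  then show ?case using Suc by (auto simp: reduced_Cons cancels_def)
qed simp

locale fgp = group G for G :: "('a,'b) monoid_scheme" (structure) +
  fixes X :: "'a set"
  assumes finX: "finite X" and XG: "X \<subseteq> carrier G"
begin

lemma lett_carrier[simp]: "a \<in> letters X \<Longrightarrow> lett G a \<in> carrier G"
  using XG by (auto simp: lett_def letters_def)

lemma proj_carrier[simp]: "set w \<subseteq> letters X \<Longrightarrow> proj G w \<in> carrier G"
  by (induction w) auto

lemma proj_append: "set u \<subseteq> letters X \<Longrightarrow> set v \<subseteq> letters X \<Longrightarrow> proj G (u @ v) = proj G u \<otimes> proj G v"
  by (induction u) (auto simp: m_assoc)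

lemma lett_cancel: "a \<in> letters X \<Longrightarrow> cancels a b \<Longrightarrow> lett G a \<otimes> lett G b = \<one>"
  using XG by (cases a) (auto simp: cancels_iff lett_def letters_def)

lemma proj_push: "set acc \<subseteq> letters X \<Longrightarrow> a \<in> letters X \<Longrightarrow> proj G (push acc a) = proj G acc \<otimes> lett G a"
proof (cases "acc \<noteq> [] \<and> cancels (last acc) a")
  case True
  assume A: "set acc \<subseteq> letters X" "a \<in> letters X"
  have e: "acc = butlast acc @ [last acc]" using True by simp
  have s: "set (butlast acc) \<subseteq> letters X" "last acc \<in> letters X"
    using A True by (auto dest: in_set_butlastD)
  have "proj G acc \<otimes> lett G a = proj G (butlast acc) \<otimes> (lett G (last acc) \<otimes> lett G a)"
    by (subst e, subst proj_append) (use s A in \<open>auto simp: m_assoc\<close>)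
  also have "\<dots> = proj G (butlast acc)" using lett_cancel[OF s(2)] True s by simp
  finally show ?thesis using True by (simp add: push_def)
next
  case False
  assume A: "set acc \<subseteq> letters X" "a \<in> letters X"
  then show ?thesis using False by (auto simp: push_def proj_append)
qed

lemma set_push: "set (push acc a) \<subseteq> set acc \<union> {a}"
  by (auto simp: push_def dest: in_set_butlastD)

lemma reduced_push: "reduced acc \<Longrightarrow> reduced (push acc a)"
  by (auto simp: push_def reduced_snoc reduced_butlast)

lemma foldl_push: "set acc \<subseteq> letters X \<Longrightarrow> set w \<subseteq> letters X \<Longrightarrow> reduced acc \<Longrightarrow>
   proj G (foldl push acc w) = proj G acc \<otimes> proj G w \<and> reduced (foldl push acc w) \<and> set (foldl push acc w) \<subseteq> letters X"
proof (induction w arbitrary: acc)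
  case Nil then show ?case by simp
next
  case (Cons a w)
  have s: "set (push acc a) \<subseteq> letters X" using set_push[of acc a] Cons.prems by auto
  have "reduced (push acc a)" using reduced_push Cons.prems by blast
  then have IH: "proj G (foldl push (push acc a) w) = proj G (push acc a) \<otimes> proj G w \<and> reduced (foldl push (push acc a) w) \<and> set (foldl push (push acc a) w) \<subseteq> letters X"
    using Cons.IH[OF s] Cons.prems by auto
  then show ?case using Cons.prems proj_push[of acc a] by (auto simp: m_assoc)
qed

lemma normalize_props: "set w \<subseteq> letters X \<Longrightarrow>
   proj G (normalize w) = proj G w \<and> reduced (normalize w) \<and> set (normalize w) \<subseteq> letters X"
  using foldl_push[of "[]" w] by (simp add: normalize_def)

lemma proj_fmult: "set u \<subseteq> letters X \<Longrightarrow> set v \<subseteq> letters X \<Longrightarrow> proj G (fmult u v) = proj G u \<otimes> proj G v"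
  using normalize_props[of "u @ v"] by (simp add: fmult_def proj_append)

lemma generate_sub: "generate G X \<subseteq> proj G ` free_words X"
proof
  fix g assume "g \<in> generate G X"
  then show "g \<in> proj G ` free_words X"
  proof induction
    case one
    then show ?case by (rule image_eqI[of _ _ "[]"]) (auto simp: free_words_def)
  next
    case (incl h)
    then show ?case using XG by (intro image_eqI[of _ _ "[(True,h)]"]) (auto simp: free_words_def lett_def)
  next
    case (inv h)
    then show ?case using XG by (intro image_eqI[of _ _ "[(False,h)]"]) (auto simp: free_words_def lett_def)
  next
    case (eng h1 h2)
    then obtain w1 w2 where w: "w1 \<in> free_words X" "w2 \<in> free_words X" "h1 = proj G w1" "h2 = proj G w2" by blast
    then have s: "set (w1 @ w2) \<subseteq> letters X" by (auto simp: free_words_iff)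
    show ?case using normalize_props[OF s] w s
      by (intro image_eqI[of _ _ "normalize (w1 @ w2)"]) (auto simp: free_words_iff proj_append)
  qed
qed

end


definition Vw :: "'a set \<Rightarrow> nat \<Rightarrow> bool \<times> 'a \<Rightarrow> 'a fword set" where
  "Vw X n e = {v. reduced v \<and> set v \<subseteq> letters X \<and> length v = n \<and> (v = [] \<or> \<not> cancels e (hd v))}"

definition cmpt :: "'a set \<Rightarrow> bool \<times> 'a \<Rightarrow> (bool \<times> 'a) set" where
  "cmpt X e = {a \<in> letters X. \<not> cancels e a}"

definition Sph :: "'a set \<Rightarrow> nat \<Rightarrow> 'a fword set" where
  "Sph X m = {w \<in> free_words X. length w = m}"

lemma finite_letters: "finite X \<Longrightarrow> finite (letters X)"
  by (simp add: letters_def)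

lemma card_letters: "finite X \<Longrightarrow> card (letters X) = 2 * card X"
  by (simp add: letters_def card_cartesian_product)

lemma finite_Vw: "finite X \<Longrightarrow> finite (Vw X n e)"
  by (rule finite_subset[OF _ finite_lists_length_eq[OF finite_letters, of X n]]) (auto simp: Vw_def)

lemma finite_Sph: "finite X \<Longrightarrow> finite (Sph X n)"
  by (rule finite_subset[OF _ finite_lists_length_eq[OF finite_letters, of X n]]) (auto simp: Sph_def free_words_iff)

lemma finite_fball: "finite X \<Longrightarrow> finite (fball X n)"
  by (rule finite_subset[OF _ finite_lists_length_le[OF finite_letters, of X n]]) (auto simp: fball_def free_words_iff)

lemma Vw_0: "Vw X 0 e = {[]}"
  by (auto simp: Vw_def)

lemma Vw_Suc: "Vw X (Suc n) e = (\<Union>a \<in> cmpt X e. (#) a ` Vw X n a)"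
proof safe
  fix v assume "v \<in> Vw X (Suc n) e"
  then obtain a v' where v: "v = a # v'" and "reduced (a # v')" "set (a # v') \<subseteq> letters X" "length v' = n" "\<not> cancels e a"
    by (cases v) (auto simp: Vw_def)
  then have "a \<in> cmpt X e" "v' \<in> Vw X n a"
    by (auto simp: Vw_def cmpt_def reduced_Cons)
  then show "v \<in> (\<Union>a \<in> cmpt X e. (#) a ` Vw X n a)" using v by blast
next
  fix a v assume "a \<in> cmpt X e" "v \<in> Vw X n a"
  then show "a # v \<in> Vw X (Suc n) e"
    by (auto simp: Vw_def cmpt_def reduced_Cons)
qed

lemma Sph_Suc: "Sph X (Suc n) = (\<Union>a \<in> letters X. (#) a ` Vw X n a)"
proof safe
  fix v assume "v \<in> Sph X (Suc n)"
  then obtain a v' where v: "v = a # v'" and "reduced (a # v')" "set (a # v') \<subseteq> letters X" "length v' = n"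
    by (cases v) (auto simp: Sph_def free_words_iff)
  then have "a \<in> letters X" "v' \<in> Vw X n a"
    by (auto simp: Vw_def reduced_Cons)
  then show "v \<in> (\<Union>a \<in> letters X. (#) a ` Vw X n a)" using v by blast
next
  fix a v assume "a \<in> letters X" "v \<in> Vw X n a"
  then show "a # v \<in> Sph X (Suc n)"
    by (auto simp: Vw_def Sph_def free_words_iff reduced_Cons)
qed

lemma card_cmpt: assumes "finite X" "e \<in> letters X" shows "card (cmpt X e) = 2 * card X - 1"
proof -
  have "cmpt X e = letters X - {(\<not> fst e, snd e)}"
    by (auto simp: cmpt_def cancels_iff)
  moreover have "(\<not> fst e, snd e) \<in> letters X" using assms by (auto simp: letters_def)
  ultimately show ?thesis using assms by (simp add: card_letters finite_letters)
qed

lemma cmpt_sub: "cmpt X e \<subseteq> letters X" by (auto simp: cmpt_def)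

lemma card_Vw: assumes "finite X" shows "e \<in> letters X \<Longrightarrow> card (Vw X n e) = (2 * card X - 1) ^ n"
proof (induction n arbitrary: e)
  case 0 then show ?case by (simp add: Vw_0)
next
  case (Suc n)
  have "card (Vw X (Suc n) e) = (\<Sum>a \<in> cmpt X e. card ((#) a ` Vw X n a))"
    unfolding Vw_Suc
    by (rule card_UN_disjoint) (auto simp: finite_Vw assms cmpt_def finite_letters)
  also have "\<dots> = (\<Sum>a \<in> cmpt X e. (2 * card X - 1) ^ n)"
  proof (rule sum.cong)
    fix a assume "a \<in> cmpt X e"
    then have "a \<in> letters X" using cmpt_sub by blast
    then show "card ((#) a ` Vw X n a) = (2 * card X - 1) ^ n" using Suc.IH by (simp add: card_image)
  qed simp
  also have "\<dots> = (2 * card X - 1) ^ Suc n" using card_cmpt[OF assms Suc.prems] by simp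
  finally show ?case .
qed

lemma card_Sph: assumes "finite X" shows "card (Sph X (Suc n)) = 2 * card X * (2 * card X - 1) ^ n"
proof -
  have "card (Sph X (Suc n)) = (\<Sum>a \<in> letters X. card ((#) a ` Vw X n a))"
    unfolding Sph_Suc
    by (rule card_UN_disjoint) (auto simp: finite_Vw assms finite_letters)
  also have "\<dots> = (\<Sum>a \<in> letters X. (2 * card X - 1) ^ n)"
    by (rule sum.cong) (auto simp: card_image card_Vw assms)
  finally show ?thesis by (simp add: card_letters assms)
qed

lemma fball_UN: "fball X n = (\<Union>m \<in> {..n}. Sph X m)"
  by (auto simp: fball_def Sph_def)

definition cnt :: "('a,'b) monoid_scheme \<Rightarrow> 'a set \<Rightarrow> nat \<Rightarrow> bool \<times> 'a \<Rightarrow> 'a \<Rightarrow> nat" where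
  "cnt G X n e h = card {v \<in> Vw X n e. proj G v = h}"

lemma cnt_le: "finite X \<Longrightarrow> cnt G X n e h \<le> card (Vw X n e)"
  unfolding cnt_def by (rule card_mono) (auto simp: finite_Vw)

context fgp begin

lemma fiber_Cons: assumes "a \<in> letters X" "h \<in> carrier G"
  shows "{v \<in> (#) a ` Vw X n a. proj G v = h} = (#) a ` {v \<in> Vw X n a. proj G v = inv (lett G a) \<otimes> h}"
proof -
  have "proj G (a # v) = h \<longleftrightarrow> proj G v = inv (lett G a) \<otimes> h" if "v \<in> Vw X n a" for v
  proof -
    have "proj G v \<in> carrier G" using that by (auto simp: Vw_def)
    then show ?thesis using assms inv_solve_left[of "proj G v" "lett G a" h] by auto
  qed
  have "{v \<in> (#) a ` Vw X n a. proj G v = h} = (#) a ` {v \<in> Vw X n a. proj G (a # v) = h}" by auto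
  also have "{v \<in> Vw X n a. proj G (a # v) = h} = {v \<in> Vw X n a. proj G v = inv (lett G a) \<otimes> h}"
    using \<open>\<And>v. v \<in> Vw X n a \<Longrightarrow> _\<close> by blast
  finally show ?thesis .
qed

lemma cnt_Suc: assumes "h \<in> carrier G"
  shows "cnt G X (Suc n) e h = (\<Sum>a \<in> cmpt X e. cnt G X n a (inv (lett G a) \<otimes> h))"
proof -
  have "{v \<in> Vw X (Suc n) e. proj G v = h} = (\<Union>a \<in> cmpt X e. {v \<in> (#) a ` Vw X n a. proj G v = h})"
    unfolding Vw_Suc by auto
  also have "\<dots> = (\<Union>a \<in> cmpt X e. (#) a ` {v \<in> Vw X n a. proj G v = inv (lett G a) \<otimes> h})"
  proof (rule SUP_cong[OF refl])
    fix a assume "a \<in> cmpt X e"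
    then show "{v \<in> (#) a ` Vw X n a. proj G v = h} = (#) a ` {v \<in> Vw X n a. proj G v = inv (lett G a) \<otimes> h}"
      using fiber_Cons[of a h n] assms cmpt_sub by blast
  qed
  finally have e: "{v \<in> Vw X (Suc n) e. proj G v = h} = \<dots>" .
  show ?thesis unfolding cnt_def e
    by (subst card_UN_disjoint) (auto simp: finite_Vw finX cmpt_def finite_letters card_image)
qed

lemma card_fiber_Sph: assumes "h \<in> carrier G"
  shows "card {w \<in> Sph X (Suc n). proj G w = h} = (\<Sum>a \<in> letters X. cnt G X n a (inv (lett G a) \<otimes> h))"
proof -
  have "{w \<in> Sph X (Suc n). proj G w = h} = (\<Union>a \<in> letters X. {v \<in> (#) a ` Vw X n a. proj G v = h})"
    unfolding Sph_Suc by auto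
  also have "\<dots> = (\<Union>a \<in> letters X. (#) a ` {v \<in> Vw X n a. proj G v = inv (lett G a) \<otimes> h})"
  proof (rule SUP_cong[OF refl])
    fix a assume "a \<in> letters X"
    then show "{v \<in> (#) a ` Vw X n a. proj G v = h} = (#) a ` {v \<in> Vw X n a. proj G v = inv (lett G a) \<otimes> h}"
      using fiber_Cons[of a h n] assms by blast
  qed
  finally have e: "{w \<in> Sph X (Suc n). proj G w = h} = \<dots>" .
  show ?thesis unfolding cnt_def e
    by (subst card_UN_disjoint) (auto simp: finite_Vw finX finite_letters card_image)
qed

end


lemma reduced_append: "reduced (u @ v) \<longleftrightarrow> reduced u \<and> reduced v \<and> (u = [] \<or> v = [] \<or> \<not> cancels (last u) (hd v))"
  by (induction u rule: reduced.induct) (auto simp: reduced_Cons)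

lemma reduced_replicate1: "reduced (replicate r z)"
  using reduced_replicate[of "[]" z r] by simp

context fgp begin

lemma proj_replicate: "z \<in> letters X \<Longrightarrow> set w \<subseteq> letters X \<Longrightarrow> proj G (replicate r z @ w) = lett G z [^] r \<otimes> proj G w"
proof (induction r)
  case (Suc r)
  have c: "lett G z \<in> carrier G" "proj G w \<in> carrier G" using Suc.prems by auto
  have "proj G (replicate (Suc r) z @ w) = lett G z \<otimes> (lett G z [^] r \<otimes> proj G w)" using Suc by simp
  also have "\<dots> = (lett G z \<otimes> lett G z [^] r) \<otimes> proj G w" using c by (simp add: m_assoc)
  also have "lett G z \<otimes> lett G z [^] r = lett G z [^] Suc r" by (metis nat_pow_Suc2 c(1))
  finally show ?case .
qed simp

lemma pow_mod: assumes "x \<in> carrier G" "x [^] (Q::nat) = \<one>" shows "x [^] (r::nat) = x [^] (r mod Q)"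
proof -
  have "x [^] r = x [^] (Q * (r div Q)) \<otimes> x [^] (r mod Q)"
    using assms(1) by (simp add: nat_pow_mult)
  also have "x [^] (Q * (r div Q)) = \<one>" using assms by (simp add: nat_pow_pow[symmetric])
  finally show ?thesis using assms(1) by simp
qed

lemma finite_image_A:
  fixes Q :: nat
  assumes Q: "Q > 0" "\<And>z. z \<in> letters X \<Longrightarrow> lett G z [^] Q = \<one>"
    and M: "\<And>m. card (proj G ` Sph X m) \<le> M" and z0: "z0 \<in> letters X"
  shows "finite (proj G ` free_words X)"
proof -
  define C where "C = card (letters X \<times> {..<Q} \<times> proj G ` Sph X 0) * 0 + card (letters X) * Q * M"
  have ballb: "card (proj G ` fball X m) \<le> C" for m
  proof -
    let ?f = "\<lambda>(z, s, g). inv (lett G z [^] s) \<otimes> g"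
    have sub: "proj G ` fball X m \<subseteq> ?f ` (letters X \<times> {..<Q} \<times> proj G ` Sph X m)"
    proof
      fix g assume "g \<in> proj G ` fball X m"
      then obtain w where w: "w \<in> free_words X" "length w \<le> m" "g = proj G w"
        by (auto simp: fball_def)
      define z where "z = (if w = [] then z0 else hd w)"
      have zL: "z \<in> letters X" using z0 w by (auto simp: z_def free_words_iff)
      define p where "p = replicate (m - length w) z @ w"
      have wL: "set w \<subseteq> letters X" "reduced w" using w by (auto simp: free_words_iff)
      have "p \<in> Sph X m"
        using reduced_replicate[of w z "m - length w"] wL zL w(2)
        by (auto simp: p_def Sph_def free_words_iff z_def)
      moreover have "proj G p = lett G z [^] ((m - length w) mod Q) \<otimes> proj G w"
        unfolding p_def using proj_replicate[OF zL wL(1)] pow_mod[OF lett_carrier[OF zL] Q(2)[OF zL]] by simp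
      then have "g = inv (lett G z [^] ((m - length w) mod Q)) \<otimes> proj G p"
        using w(3) zL wL by (simp add: inv_solve_left)
      moreover have "(m - length w) mod Q < Q" using Q(1) by simp
      ultimately show "g \<in> ?f ` (letters X \<times> {..<Q} \<times> proj G ` Sph X m)"
        using zL by (intro image_eqI[of _ _ "(z, (m - length w) mod Q, proj G p)"]) auto
    qed
    have "card (proj G ` fball X m) \<le> card (?f ` (letters X \<times> {..<Q} \<times> proj G ` Sph X m))"
      by (rule card_mono[OF _ sub]) (auto simp: finite_letters finX finite_Sph)
    also have "\<dots> \<le> card (letters X \<times> {..<Q} \<times> proj G ` Sph X m)" by (rule card_image_le) (auto simp: finite_letters finX finite_Sph)
    also have "\<dots> = card (letters X) * Q * card (proj G ` Sph X m)" by (simp add: card_cartesian_product)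
    also have "\<dots> \<le> card (letters X) * Q * M" using M by simp
    finally show ?thesis by (simp add: C_def)
  qed
  show ?thesis
  proof (rule ccontr)
    assume "infinite (proj G ` free_words X)"
    then obtain F where F: "F \<subseteq> proj G ` free_words X" "finite F" "card F = Suc C"
      using infinite_arbitrarily_large by blast
    have "\<forall>g \<in> F. \<exists>w \<in> free_words X. g = proj G w" using F by blast
    then obtain W where W: "\<And>g. g \<in> F \<Longrightarrow> W g \<in> free_words X \<and> g = proj G (W g)" by metis
    define m where "m = Max ((\<lambda>g. length (W g)) ` F)"
    have "F \<subseteq> proj G ` fball X m"
    proof
      fix g assume g: "g \<in> F"
      have "length (W g) \<le> m" unfolding m_def using F(2) g by (intro Max_ge) auto
      then show "g \<in> proj G ` fball X m" using W[OF g] by (auto simp: fball_def)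
    qed
    then have "card F \<le> card (proj G ` fball X m)" by (rule card_mono[rotated]) (auto simp: finite_fball finX)
    then show False using ballb[of m] F(3) by simp
  qed
qed

lemma pow_eq_B:
  assumes x: "x \<in> X" and c: "(b, y) \<in> letters X" "y \<noteq> x"
    and M: "\<And>m. card (proj G ` Sph X m) \<le> M"
  shows "\<exists>d>0. x [^] (d::nat) = lett G (b, y) [^] d"
proof -
  let ?c = "lett G (b, y)"
  have xc: "x \<in> carrier G" "?c \<in> carrier G" using x XG c by auto
  define f where "f i = proj G (replicate i (True, x) @ replicate (M - i) (b, y))" for i
  have fi: "f i = x [^] i \<otimes> ?c [^] (M - i)" for i
  proof -
    have "proj G (replicate (M - i) (b, y)) = ?c [^] (M - i)"
      using proj_replicate[of "(b, y)" "[]" "M - i"] c xc by simp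
    moreover have "lett G (True, x) = x" by (simp add: lett_def)
    moreover have "set (replicate (M - i) (b, y)) \<subseteq> letters X" "(True, x) \<in> letters X" using c x by (auto simp: letters_def)
    ultimately show ?thesis unfolding f_def using proj_replicate[of "(True, x)" "replicate (M - i) (b, y)" i]
      by simp
  qed
  have "f ` {0..M} \<subseteq> proj G ` Sph X M"
  proof
    fix g assume "g \<in> f ` {0..M}"
    then obtain i where i: "i \<le> M" "g = f i" by auto
    have "replicate i (True, x) @ replicate (M - i) (b, y) \<in> Sph X M"
      using i x c reduced_replicate1 by (auto simp: Sph_def free_words_iff reduced_append letters_def cancels_def)
    then show "g \<in> proj G ` Sph X M" using i f_def by auto
  qed
  then have "card (f ` {0..M}) \<le> M"
    using M[of M] card_mono[OF finite_imageI[OF finite_Sph[OF finX]]] by (meson order_trans)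
  then have "\<not> inj_on f {0..M}" using card_image by fastforce
  then obtain i i' where ii: "i \<in> {0..M}" "i' \<in> {0..M}" "i \<noteq> i'" "f i = f i'"
    unfolding inj_on_def by blast
  have key: "\<exists>d>0. x [^] (d::nat) = ?c [^] d" if "i < i'" "i' \<le> M" "f i = f i'" for i i'
  proof -
    define d where "d = i' - i"
    have "x [^] i \<otimes> ?c [^] (M - i) = x [^] i \<otimes> (x [^] d \<otimes> ?c [^] (M - i'))"
      using that fi xc by (simp add: d_def m_assoc[symmetric] nat_pow_mult)
    then have "?c [^] (M - i) = x [^] d \<otimes> ?c [^] (M - i')"
      using xc by (simp add: Units_l_cancel[of "x [^] i", simplified Units_eq] )
    moreover have "?c [^] (M - i) = ?c [^] d \<otimes> ?c [^] (M - i')"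
      using xc that by (simp add: nat_pow_mult d_def)
    ultimately have "x [^] d = ?c [^] d" using xc by simp
    moreover have "d > 0" using that d_def by simp
    ultimately show ?thesis by blast
  qed
  show ?thesis
  proof (cases "i < i'")
    case True then show ?thesis using key ii by auto
  next
    case False then show ?thesis using key[of i' i] ii by auto
  qed
qed

lemma torsion_B:
  assumes x: "x \<in> X" and y: "y \<in> X" "y \<noteq> x"
    and M: "\<And>m. card (proj G ` Sph X m) \<le> M"
  shows "\<exists>p>0. x [^] (p::nat) = \<one>"
proof -
  have xy: "x \<in> carrier G" "y \<in> carrier G" using x y XG by auto
  obtain d1 :: nat where d1: "d1 > 0" "x [^] d1 = y [^] d1"
    using pow_eq_B[OF x, of True y M] y M by (auto simp: letters_def lett_def)
  obtain d2 :: nat where d2: "d2 > 0" "x [^] d2 = inv y [^] d2"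
    using pow_eq_B[OF x, of False y M] y M by (auto simp: letters_def lett_def)
  define u where "u = y [^] (d1 * d2)"
  have u: "u \<in> carrier G" using xy by (simp add: u_def)
  have a1: "x [^] (d1 * d2) = u"
    using d1 xy by (metis nat_pow_pow u_def)
  have a2: "x [^] (d1 * d2) = inv u"
    using d2 xy by (metis mult.commute nat_pow_pow nat_pow_inv u_def nat_pow_closed)
  have "u \<otimes> u = \<one>" using a1 a2 u by (metis r_inv)
  then have "x [^] (d1 * d2) \<otimes> x [^] (d1 * d2) = \<one>" using a1 by simp
  then have "x [^] (d1 * d2 + d1 * d2) = \<one>" using xy by (simp add: nat_pow_mult)
  then show ?thesis using d1 d2 by (intro exI[of _ "d1 * d2 + d1 * d2"]) auto
qed

lemma sph_bound_C:
  assumes e: "e \<in> letters X" and y: "y \<in> X" "y \<noteq> snd e"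
    and N: "\<And>j. card (proj G ` Vw X j e) \<le> N"
  shows "card (proj G ` Sph X m) \<le> 2 * N"
proof -
  have yc: "y \<in> carrier G" using y XG by auto
  let ?V = "proj G ` Vw X (Suc m) e"
  have sub: "proj G ` Sph X m \<subseteq> (\<lambda>g. inv y \<otimes> g) ` ?V \<union> (\<lambda>g. y \<otimes> g) ` ?V"
  proof
    fix g assume "g \<in> proj G ` Sph X m"
    then obtain w where w: "w \<in> Sph X m" "g = proj G w" by auto
    have wL: "set w \<subseteq> letters X" "reduced w" "length w = m" using w by (auto simp: Sph_def free_words_iff)
    have pw: "proj G w \<in> carrier G" using wL by simp
    show "g \<in> (\<lambda>g. inv y \<otimes> g) ` ?V \<union> (\<lambda>g. y \<otimes> g) ` ?V"
    proof (cases "w \<noteq> [] \<and> hd w = (False, y)")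
      case True
      have m1: "(False, y) # w \<in> Vw X (Suc m) e"
        using True wL y e by (auto simp: Vw_def reduced_Cons cancels_def letters_def)
      have m2: "inv y \<otimes> g = proj G ((False, y) # w)" using w by (simp add: lett_def)
      have m3: "inv y \<otimes> g \<in> ?V" by (simp only: m2) (rule imageI[OF m1])
      have m4: "g = y \<otimes> (inv y \<otimes> g)" using yc pw w by (simp add: m_assoc[symmetric])
      show ?thesis using m3 m4 by (intro UnI2 image_eqI[of g _ "inv y \<otimes> g"])
    next
      case False
      have m1: "(True, y) # w \<in> Vw X (Suc m) e"
        using False wL y e by (auto simp: Vw_def reduced_Cons cancels_iff letters_def)
      have m2: "y \<otimes> g = proj G ((True, y) # w)" using w by (simp add: lett_def)
      have m3: "y \<otimes> g \<in> ?V" by (simp only: m2) (rule imageI[OF m1])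
      have m4: "g = inv y \<otimes> (y \<otimes> g)" using yc pw w by (simp add: m_assoc[symmetric])
      show ?thesis using m3 m4 by (intro UnI1 image_eqI[of g _ "y \<otimes> g"])
    qed
  qed
  have fV: "finite ?V" by (simp add: finite_Vw finX)
  have "card (proj G ` Sph X m) \<le> card ((\<lambda>g. inv y \<otimes> g) ` ?V \<union> (\<lambda>g. y \<otimes> g) ` ?V)"
    by (rule card_mono[OF _ sub]) (simp add: fV)
  also have "\<dots> \<le> card ((\<lambda>g. inv y \<otimes> g) ` ?V) + card ((\<lambda>g. y \<otimes> g) ` ?V)" by (rule card_Un_le)
  also have "\<dots> \<le> card ?V + card ?V" by (intro add_mono card_image_le fV)
  also have "\<dots> \<le> 2 * N" using N[of "Suc m"] by simp
  finally show ?thesis .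
qed

end


definition st :: "bool \<times> 'a \<Rightarrow> 'a fword \<Rightarrow> bool \<times> 'a" where
  "st e t = (if t = [] then e else last t)"

locale fgp2 = fgp +
  assumes infG: "infinite (carrier G)" and genG: "generate G X = carrier G" and two: "card X \<ge> 2"
begin

abbreviation "q \<equiv> 2 * card X - 1"

lemma cmpt_mem: "a \<in> cmpt X e \<Longrightarrow> a \<in> letters X"
  by (simp add: cmpt_def)

lemma q_ge: "q \<ge> 3" using two by simp

lemma other_elem: "\<exists>y \<in> X. y \<noteq> x"
proof (rule ccontr)
  assume "\<not> ?thesis"
  then have "X \<subseteq> {x}" by auto
  then have "card X \<le> card {x}" by (intro card_mono) auto
  then show False using two by simp
qed

lemma Vw_img_unbounded: assumes e: "e \<in> letters X" shows "\<exists>j. card (proj G ` Vw X j e) > N"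
proof (rule ccontr)
  assume "\<not> ?thesis"
  then have N: "\<And>j. card (proj G ` Vw X j e) \<le> N" by (simp add: not_less)
  obtain y where y: "y \<in> X" "y \<noteq> snd e" using other_elem by blast
  have M: "\<And>m. card (proj G ` Sph X m) \<le> 2 * N" using sph_bound_C[OF e y N] .
  have "\<forall>x\<in>X. \<exists>p>0. x [^] (p::nat) = \<one>"
  proof
    fix x assume x: "x \<in> X"
    obtain y' where "y' \<in> X" "y' \<noteq> x" using other_elem by blast
    then show "\<exists>p>0. x [^] (p::nat) = \<one>" using torsion_B[OF x _ _ M] by blast
  qed
  then obtain P where P: "\<And>x. x \<in> X \<Longrightarrow> P x > 0 \<and> x [^] (P x :: nat) = \<one>" by metis
  define Q where "Q = (\<Prod>x\<in>X. P x)"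
  have Qpos: "Q > 0" using P finX by (simp add: Q_def prod_pos)
  have Qx: "x [^] Q = \<one>" if x: "x \<in> X" for x
  proof -
    have "Q = P x * (\<Prod>y\<in>X - {x}. P y)" using finX x by (simp add: Q_def prod.remove)
    then have "x [^] Q = (x [^] P x) [^] (\<Prod>y\<in>X - {x}. P y)" using x XG by (auto simp: nat_pow_pow)
    then show ?thesis using P[OF x] by simp
  qed
  have Qz: "lett G z [^] Q = \<one>" if "z \<in> letters X" for z
    using that Qx XG by (cases z) (auto simp: letters_def lett_def nat_pow_inv)
  obtain z0 where z0: "z0 \<in> letters X" using e by blast
  have "finite (proj G ` free_words X)" using finite_image_A[OF Qpos Qz M z0] by blast
  moreover have "carrier G \<subseteq> proj G ` free_words X" using generate_sub genG by simp
  ultimately show False using infG finite_subset by blast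
qed

definition Dv :: "nat \<Rightarrow> real" where
  "Dv n = Max ((\<lambda>(e,h). real (cnt G X n e h) / real q ^ n) ` (letters X \<times> carrier G))"

lemma Dv_fin: "finite ((\<lambda>(e,h). real (cnt G X n e h) / real q ^ n) ` (letters X \<times> carrier G))"
proof (rule finite_subset)
  show "(\<lambda>(e,h). real (cnt G X n e h) / real q ^ n) ` (letters X \<times> carrier G) \<subseteq> (\<lambda>i. real i / real q ^ n) ` {..q ^ n}"
  proof clarify
    fix e h assume "e \<in> letters X" "h \<in> carrier G"
    then have "cnt G X n e h \<le> q ^ n" using cnt_le[OF finX, of G n e h] card_Vw[OF finX] by simp
    then show "real (cnt G X n e h) / real q ^ n \<in> (\<lambda>i. real i / real q ^ n) ` {..q ^ n}" by auto
  qed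
qed simp

lemma L_ne: "letters X \<noteq> {}"
  using two by (auto simp: letters_def)

lemma Dv_ge: "e \<in> letters X \<Longrightarrow> h \<in> carrier G \<Longrightarrow> real (cnt G X n e h) \<le> Dv n * real q ^ n"
proof -
  assume "e \<in> letters X" "h \<in> carrier G"
  then have "real (cnt G X n e h) / real q ^ n \<le> Dv n"
    unfolding Dv_def by (intro Max_ge[OF Dv_fin]) force
  moreover have "real q ^ n > 0" using q_ge by simp
  ultimately show ?thesis by (simp add: divide_le_eq)
qed

lemma Dv_attained: "\<exists>e \<in> letters X. \<exists>h \<in> carrier G. real (cnt G X n e h) = Dv n * real q ^ n"
proof -
  have "Dv n \<in> (\<lambda>(e,h). real (cnt G X n e h) / real q ^ n) ` (letters X \<times> carrier G)"
    unfolding Dv_def by (rule Max_in[OF Dv_fin]) (use L_ne in auto)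
  then obtain e h where "e \<in> letters X" "h \<in> carrier G" "Dv n = real (cnt G X n e h) / real q ^ n" by auto
  moreover have "real q ^ n > 0" using q_ge by simp
  ultimately show ?thesis by auto
qed

lemma Dv_nonneg: "Dv n \<ge> 0"
proof -
  obtain e where e: "e \<in> letters X" using L_ne by blast
  have "0 \<le> real (cnt G X n e \<one>) / real q ^ n" by simp
  also have "\<dots> \<le> Dv n"
    unfolding Dv_def by (intro Max_ge[OF Dv_fin]) (use e in force)
  finally show ?thesis .
qed

lemma cnt_Suc_real: "h \<in> carrier G \<Longrightarrow>
  real (cnt G X (Suc n) e h) = (\<Sum>a \<in> cmpt X e. real (cnt G X n a (inv (lett G a) \<otimes> h)))"
  using cnt_Suc[of h n e] by simp

lemma Dv_dec: "Dv (Suc n) \<le> Dv n"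
proof -
  have "real (cnt G X (Suc n) e h) / real q ^ Suc n \<le> Dv n" if e: "e \<in> letters X" and h: "h \<in> carrier G" for e h
  proof -
    have "real (cnt G X (Suc n) e h) \<le> (\<Sum>a \<in> cmpt X e. Dv n * real q ^ n)"
      unfolding cnt_Suc_real[OF h]
    proof (rule sum_mono)
      fix a assume "a \<in> cmpt X e"
      then have aL: "a \<in> letters X" by (rule cmpt_mem)
      show "real (cnt G X n a (inv (lett G a) \<otimes> h)) \<le> Dv n * real q ^ n"
        using h aL by (intro Dv_ge) auto
    qed
    also have "\<dots> = real q * (Dv n * real q ^ n)" using card_cmpt[OF finX e] by simp
    finally have "real (cnt G X (Suc n) e h) \<le> Dv n * real q ^ Suc n" by (simp add: algebra_simps)
    moreover have "real q ^ Suc n > 0" using q_ge by (simp del: power_Suc)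
    ultimately show ?thesis by (simp add: divide_le_eq del: power_Suc)
  qed
  then show ?thesis unfolding Dv_def[of "Suc n"]
    by (intro Max.boundedI[OF Dv_fin]) (use L_ne in auto)
qed

lemma st_letters: "e \<in> letters X \<Longrightarrow> t \<in> Vw X j e \<Longrightarrow> st e t \<in> letters X"
  by (auto simp: st_def Vw_def)

lemma backward:
  assumes U: "\<And>n' e h. n' \<ge> m \<Longrightarrow> e \<in> letters X \<Longrightarrow> h \<in> carrier G \<Longrightarrow> real (cnt G X n' e h) \<le> U * real q ^ n'"
  shows "e \<in> letters X \<Longrightarrow> h \<in> carrier G \<Longrightarrow> real (cnt G X (m + j) e h) \<ge> (U - \<gamma>) * real q ^ (m + j) \<Longrightarrow>
     t \<in> Vw X j e \<Longrightarrow> real (cnt G X m (st e t) (inv (proj G t) \<otimes> h)) \<ge> (U - real q ^ j * \<gamma>) * real q ^ m"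
proof (induction j arbitrary: e h \<gamma> t)
  case 0
  then have "t = []" by (simp add: Vw_0)
  then show ?case using 0 by (simp add: st_def)
next
  case (Suc j)
  from Suc.prems(4) obtain a t' where a: "a \<in> cmpt X e" "t' \<in> Vw X j a" "t = a # t'"
    unfolding Vw_Suc by auto
  have aL: "a \<in> letters X" using a cmpt_mem by auto
  let ?h = "inv (lett G a) \<otimes> h"
  have hc: "?h \<in> carrier G" using aL Suc.prems by simp
  let ?f = "\<lambda>a'. real (cnt G X (m + j) a' (inv (lett G a') \<otimes> h))"
  define A where "A = real q ^ (m + j)"
  have tot: "real (cnt G X (m + Suc j) e h) = (\<Sum>a'\<in>cmpt X e. ?f a')"
    using cnt_Suc_real[OF Suc.prems(2), of "m + j" e] by simp
  have fin: "finite (cmpt X e)" using finite_subset[OF cmpt_sub finite_letters[OF finX]] .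
  have split: "(\<Sum>a'\<in>cmpt X e. ?f a') = ?f a + (\<Sum>a'\<in>cmpt X e - {a}. ?f a')"
    using a(1) fin by (simp add: sum.remove)
  have cq: "card (cmpt X e - {a}) = q - 1" using card_cmpt[OF finX Suc.prems(1)] a(1) fin by simp
  have others: "(\<Sum>a'\<in>cmpt X e - {a}. ?f a') \<le> (real q - 1) * (U * A)"
  proof -
    have "(\<Sum>a'\<in>cmpt X e - {a}. ?f a') \<le> (\<Sum>a'\<in>cmpt X e - {a}. U * A)"
      unfolding A_def by (rule sum_mono) (use U Suc.prems(2) in \<open>auto dest: cmpt_mem\<close>)
    also have "\<dots> = real (q - 1) * (U * A)" using cq by simp
    also have "real (q - 1) = real q - 1" using q_ge by (simp add: of_nat_diff)
    finally show ?thesis .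
  qed
  have low: "(U - \<gamma>) * real q * A \<le> ?f a + (real q - 1) * (U * A)"
    using Suc.prems(3) tot split others by (simp add: A_def algebra_simps)
  have "(U - \<gamma>) * real q * A - (real q - 1) * (U * A) = (U - real q * \<gamma>) * A" by (simp add: algebra_simps)
  then have fa: "?f a \<ge> (U - real q * \<gamma>) * real q ^ (m + j)" using low unfolding A_def by linarith
  have IH: "real (cnt G X m (st a t') (inv (proj G t') \<otimes> ?h)) \<ge> (U - real q ^ j * (real q * \<gamma>)) * real q ^ m"
    using Suc.IH[OF aL hc fa a(2)] .
  have s: "st e t = st a t'" using a by (simp add: st_def)
  have pt: "proj G t' \<in> carrier G" using a(2) by (auto simp: Vw_def)
  have i: "inv (proj G t) \<otimes> h = inv (proj G t') \<otimes> ?h"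
    using a(3) pt aL Suc.prems(2) by (simp add: inv_mult_group m_assoc)
  show ?case using IH s i by (simp add: algebra_simps)
qed

lemma count_bound:
  assumes e: "e \<in> letters X" and h: "h \<in> carrier G"
    and low: "\<And>t. t \<in> Vw X j e \<Longrightarrow> real (cnt G X m (st e t) (inv (proj G t) \<otimes> h)) \<ge> c"
  shows "real (card (proj G ` Vw X j e)) * c \<le> real (2 * card X) * real q ^ m"
proof -
  let ?I = "proj G ` Vw X j e"
  define T where "T g = (SOME t. t \<in> Vw X j e \<and> proj G t = g)" for g
  have T: "T g \<in> Vw X j e \<and> proj G (T g) = g" if "g \<in> ?I" for g
    using that unfolding T_def by (rule imageE) (rule someI, blast)
  define A where "A g = {st e (T g)} \<times> {v \<in> Vw X m (st e (T g)). proj G v = inv g \<otimes> h}" for g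
  have gc: "g \<in> carrier G" if "g \<in> ?I" for g using that by (auto simp: Vw_def)
  have finI: "finite ?I" by (simp add: finite_Vw finX)
  have finA: "finite (A g)" for g by (simp add: A_def finite_Vw finX)
  have Asub: "(\<Union>g\<in>?I. A g) \<subseteq> Sigma (letters X) (\<lambda>e. Vw X m e)"
  proof (rule UN_least)
    fix g assume g: "g \<in> ?I"
    then have "st e (T g) \<in> letters X" using T st_letters[OF e] by blast
    then show "A g \<subseteq> Sigma (letters X) (\<lambda>e. Vw X m e)" by (auto simp: A_def)
  qed
  have disj: "A g \<inter> A g' = {}" if "g \<in> ?I" "g' \<in> ?I" "g \<noteq> g'" for g g'
  proof (rule ccontr)
    assume "A g \<inter> A g' \<noteq> {}"
    then obtain s v where "(s, v) \<in> A g" "(s, v) \<in> A g'" by auto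
    then have "inv g \<otimes> h = inv g' \<otimes> h" by (auto simp: A_def)
    then have "inv g = inv g'" using gc that h by simp
    then have "inv (inv g) = inv (inv g')" by simp
    then show False using gc that by simp
  qed
  have cardA: "real (card (A g)) \<ge> c" if "g \<in> ?I" for g
  proof -
    have "card (A g) = cnt G X m (st e (T g)) (inv g \<otimes> h)"
      by (simp add: A_def card_cartesian_product cnt_def)
    then show ?thesis using low[of "T g"] T[OF that] by simp
  qed
  have "real (card ?I) * c = (\<Sum>g\<in>?I. c)" by simp
  also have "\<dots> \<le> (\<Sum>g\<in>?I. real (card (A g)))" by (rule sum_mono) (use cardA in auto)
  also have "\<dots> = real (card (\<Union>g\<in>?I. A g))"
    by (subst card_UN_disjoint) (use finI finA disj in auto)
  also have "\<dots> \<le> real (card (Sigma (letters X) (\<lambda>e. Vw X m e)))"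
    by (intro of_nat_mono card_mono Asub) (simp add: finite_SigmaI finite_letters finX finite_Vw)
  also have "card (Sigma (letters X) (\<lambda>e. Vw X m e)) = (\<Sum>e\<in>letters X. card (Vw X m e))"
    by (rule card_SigmaI) (simp_all add: finite_letters finX finite_Vw)
  also have "\<dots> = (\<Sum>e\<in>letters X. q ^ m)" by (rule sum.cong) (simp_all add: card_Vw finX)
  also have "\<dots> = 2 * card X * q ^ m" by (simp add: card_letters finX)
  finally show ?thesis by simp
qed

end


context fgp2 begin

lemma spreading: assumes eps: "\<epsilon> > 0"
  shows "\<exists>L0. \<forall>n\<ge>L0. \<forall>e\<in>letters X. \<forall>h\<in>carrier G. real (cnt G X n e h) \<le> \<epsilon> * real q ^ n"
proof -
  have dec: "decseq Dv" by (rule decseq_SucI) (rule Dv_dec)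
  obtain \<delta> where lim: "Dv \<longlonglongrightarrow> \<delta>" and le: "\<forall>i. \<delta> \<le> Dv i"
    using decseq_convergent[OF dec, of 0] Dv_nonneg by blast
  have qpos: "real q ^ n > 0" for n using q_ge by simp
  show ?thesis
  proof (cases "\<delta> < \<epsilon>")
    case True
    have "eventually (\<lambda>n. Dv n < \<epsilon>) sequentially" using order_tendstoD(2)[OF lim True] .
    then obtain L0 where L0: "\<And>n. n \<ge> L0 \<Longrightarrow> Dv n < \<epsilon>" by (auto simp: eventually_sequentially)
    have "real (cnt G X n e h) \<le> \<epsilon> * real q ^ n" if "n \<ge> L0" "e \<in> letters X" "h \<in> carrier G" for n e h
    proof -
      have "real (cnt G X n e h) \<le> Dv n * real q ^ n" using Dv_ge that by blast
      also have "\<dots> \<le> \<epsilon> * real q ^ n" using L0[OF that(1)] qpos[of n] by (intro mult_right_mono) auto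
      finally show ?thesis .
    qed
    then show ?thesis by blast
  next
    case False
    then have dpos: "\<delta> > 0" using eps by simp
    define N where "N = nat \<lceil>4 * real (card X) / \<delta>\<rceil>"
    have "\<forall>e\<in>letters X. \<exists>j. card (proj G ` Vw X j e) > N" using Vw_img_unbounded by blast
    then obtain J where J: "\<And>e. e \<in> letters X \<Longrightarrow> card (proj G ` Vw X (J e) e) > N" by metis
    define Jm where "Jm = Max (J ` letters X)"
    have JJ: "J e \<le> Jm" if "e \<in> letters X" for e
      unfolding Jm_def using that finite_letters[OF finX] by (intro Max_ge) auto
    define \<eta> where "\<eta> = \<delta> / (2 * real q ^ Jm)"
    have etapos: "\<eta> > 0" using dpos qpos[of Jm] by (simp add: \<eta>_def)
    have "eventually (\<lambda>n. Dv n < \<delta> + \<eta>) sequentially"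
      using order_tendstoD(2)[OF lim] etapos by simp
    then obtain n0 where n0: "\<And>n. n \<ge> n0 \<Longrightarrow> Dv n < \<delta> + \<eta>" by (auto simp: eventually_sequentially)
    define l where "l = n0 + Jm"
    obtain e h where e: "e \<in> letters X" and h: "h \<in> carrier G" and eq: "real (cnt G X l e h) = Dv l * real q ^ l"
      using Dv_attained by blast
    define j where "j = J e"
    define m where "m = l - j"
    have jJ: "j \<le> Jm" using JJ[OF e] by (simp add: j_def)
    have mn0: "m \<ge> n0" and lmj: "l = m + j" using jJ by (auto simp: m_def l_def)
    have U: "real (cnt G X n' e' h') \<le> (\<delta> + \<eta>) * real q ^ n'"
      if "n' \<ge> m" "e' \<in> letters X" "h' \<in> carrier G" for n' e' h'
    proof -
      have "real (cnt G X n' e' h') \<le> Dv n' * real q ^ n'" using Dv_ge that by blast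
      also have "\<dots> \<le> (\<delta> + \<eta>) * real q ^ n'" using n0[of n'] that(1) mn0 qpos[of n']
        by (intro mult_right_mono) auto
      finally show ?thesis .
    qed
    have start: "real (cnt G X (m + j) e h) \<ge> ((\<delta> + \<eta>) - \<eta>) * real q ^ (m + j)"
      using eq le[rule_format, of l] qpos[of l] lmj by (simp add: mult_right_mono)
    have bw: "real (cnt G X m (st e t) (inv (proj G t) \<otimes> h)) \<ge> ((\<delta> + \<eta>) - real q ^ j * \<eta>) * real q ^ m"
      if "t \<in> Vw X j e" for t
      using backward[of m "\<delta> + \<eta>", OF U e h start that] by blast
    have "real q ^ j \<le> real q ^ Jm" using jJ q_ge by (intro power_increasing) auto
    then have "real q ^ j * \<eta> \<le> real q ^ Jm * \<eta>" using etapos by (intro mult_right_mono) auto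
    also have "real q ^ Jm * \<eta> = \<delta> / 2"
    proof -
      have gen: "\<And>r::real. r > 0 \<Longrightarrow> r * (\<delta> / (2 * r)) = \<delta> / 2" by (simp add: field_simps)
      show ?thesis unfolding \<eta>_def by (rule gen[OF qpos])
    qed
    finally have qj: "real q ^ j * \<eta> \<le> \<delta> / 2" .
    have low: "real (cnt G X m (st e t) (inv (proj G t) \<otimes> h)) \<ge> \<delta> / 2 * real q ^ m"
      if "t \<in> Vw X j e" for t
    proof -
      have "\<delta> / 2 * real q ^ m \<le> ((\<delta> + \<eta>) - real q ^ j * \<eta>) * real q ^ m"
        using qj etapos qpos[of m] by (intro mult_right_mono) auto
      then show ?thesis using bw[OF that] by linarith
    qed
    have cb: "real (card (proj G ` Vw X j e)) * (\<delta> / 2 * real q ^ m) \<le> real (2 * card X) * real q ^ m"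
      using count_bound[OF e h low] .
    then have "real (card (proj G ` Vw X j e)) * (\<delta> / 2) \<le> real (2 * card X)"
      using qpos[of m] by (simp add: mult.assoc[symmetric])
    then have "real (card (proj G ` Vw X j e)) \<le> 4 * real (card X) / \<delta>"
      using dpos by (simp add: field_simps)
    also have "\<dots> \<le> real N" unfolding N_def by (rule real_nat_ceiling_ge)
    finally have "card (proj G ` Vw X j e) \<le> N" by simp
    then show ?thesis using J[OF e] by (simp add: j_def)
  qed
qed

lemma card_fiber_fball: "finite X \<Longrightarrow> card {w \<in> fball X n. P w} = (\<Sum>s\<le>n. card {w \<in> Sph X s. P w})"
proof -
  assume fX: "finite X"
  have fs: "\<And>s. finite {w \<in> Sph X s. P w}" using finite_Sph[OF fX] by simp
  have "{w \<in> fball X n. P w} = (\<Union>s\<in>{..n}. {w \<in> Sph X s. P w})" by (auto simp: fball_UN)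
  then show ?thesis
    by (simp only:) (rule card_UN_disjoint, simp, use fs in blast, auto simp: Sph_def)
qed

lemma ball_bound: assumes eps: "\<epsilon> > 0"
  shows "\<exists>L0. \<forall>n. \<forall>h\<in>carrier G. real (card {w \<in> fball X n. proj G w = h}) \<le> real (card (fball X L0)) + \<epsilon> * real (card (fball X n))"
proof -
  obtain L0 where L0: "\<And>n e h. n \<ge> L0 \<Longrightarrow> e \<in> letters X \<Longrightarrow> h \<in> carrier G \<Longrightarrow> real (cnt G X n e h) \<le> \<epsilon> * real q ^ n"
    using spreading[OF eps] by blast
  have sph: "real (card {w \<in> Sph X s. proj G w = h}) \<le> real (if s \<le> L0 then card (Sph X s) else 0) + \<epsilon> * real (card (Sph X s))"
    if h: "h \<in> carrier G" for s h
  proof (cases "s \<le> L0")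
    case True
    have "card {w \<in> Sph X s. proj G w = h} \<le> card (Sph X s)" by (rule card_mono) (auto simp: finite_Sph finX)
    moreover have "0 \<le> \<epsilon> * real (card (Sph X s))" using eps by simp
    ultimately show ?thesis using True by simp
  next
    case False
    then obtain m where m: "s = Suc m" "m \<ge> L0" by (cases s) auto
    have "real (card {w \<in> Sph X s. proj G w = h}) = (\<Sum>a\<in>letters X. real (cnt G X m a (inv (lett G a) \<otimes> h)))"
      unfolding m(1) card_fiber_Sph[OF h] by simp
    also have "\<dots> \<le> (\<Sum>a\<in>letters X. \<epsilon> * real q ^ m)"
      by (rule sum_mono) (use L0 m h in auto)
    also have "\<dots> = \<epsilon> * real (card (Sph X s))"
      unfolding m(1) card_Sph[OF finX] by (simp add: card_letters finX)
    finally show ?thesis using False by simp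
  qed
  have "real (card {w \<in> fball X n. proj G w = h}) \<le> real (card (fball X L0)) + \<epsilon> * real (card (fball X n))"
    if h: "h \<in> carrier G" for n h
  proof -
    have "real (card {w \<in> fball X n. proj G w = h}) = (\<Sum>s\<le>n. real (card {w \<in> Sph X s. proj G w = h}))"
      by (simp add: card_fiber_fball[OF finX])
    also have "\<dots> \<le> (\<Sum>s\<le>n. real (if s \<le> L0 then card (Sph X s) else 0) + \<epsilon> * real (card (Sph X s)))"
      by (rule sum_mono) (rule sph[OF h])
    also have "\<dots> = real (\<Sum>s\<le>n. (if s \<le> L0 then card (Sph X s) else 0)) + \<epsilon> * real (\<Sum>s\<le>n. card (Sph X s))"
      by (simp add: sum.distrib sum_distrib_left)
    also have "(\<Sum>s\<le>n. (if s \<le> L0 then card (Sph X s) else 0)) \<le> card (fball X L0)"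
    proof -
      have "(\<Sum>s\<le>n. (if s \<le> L0 then card (Sph X s) else 0)) = (\<Sum>s\<in>{s\<in>{..n}. s \<le> L0}. card (Sph X s))"
        by (rule sum.inter_filter[symmetric]) simp
      also have "\<dots> \<le> (\<Sum>s\<le>L0. card (Sph X s))" by (rule sum_mono2) auto
      also have "\<dots> = card (fball X L0)" using card_fiber_fball[OF finX, of L0 "\<lambda>_. True"] by simp
      finally show ?thesis .
    qed
    also have "(\<Sum>s\<le>n. card (Sph X s)) = card (fball X n)" using card_fiber_fball[OF finX, of n "\<lambda>_. True"] by simp
    finally show ?thesis using eps by simp
  qed
  then show ?thesis by blast
qed

end


lemma single_hd: "reduced w \<Longrightarrow> set w \<subseteq> letters {x} \<Longrightarrow> \<forall>y\<in>set w. y = hd w"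
proof (induction w)
  case Nil then show ?case by simp
next
  case (Cons a w)
  have w: "reduced w" "set w \<subseteq> letters {x}" using Cons.prems by (auto simp: reduced_Cons)
  show ?case
  proof (cases w)
    case Nil then show ?thesis by simp
  next
    case (Cons b w')
    have "\<not> cancels a b" using Cons Cons.prems(1) by (simp add: reduced_Cons)
    moreover have "a \<in> letters {x}" "b \<in> letters {x}" using Cons \<open>set (a # w) \<subseteq> letters {x}\<close> by auto
    ultimately have "b = a" by (cases a; cases b) (auto simp: letters_def cancels_def)
    then show ?thesis using Cons.IH[OF w] Cons by auto
  qed
qed

lemma single_words: assumes "w \<in> free_words {x}"
  shows "w = replicate (length w) (True, x) \<or> w = replicate (length w) (False, x)"
proof (cases w)
  case Nil then show ?thesis by simp
next
  case (Cons a w')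
  have r: "reduced w" "set w \<subseteq> letters {x}" using assms by (auto simp: free_words_iff)
  then have all: "\<forall>y\<in>set w. y = a" using single_hd[OF r] Cons by simp
  have "a = (True, x) \<or> a = (False, x)" using r Cons by (cases a) (auto simp: letters_def)
  moreover have "w = replicate (length w) a" using all by (simp add: replicate_length_same)
  ultimately show ?thesis by auto
qed

locale fgp1 = fgp +
  assumes infG: "infinite (carrier G)" and genG: "generate G X = carrier G"
begin

lemma X_ne: "X \<noteq> {}"
proof
  assume "X = {}"
  then have "free_words X = {[]}" by (auto simp: free_words_def)
  then have "carrier G \<subseteq> {\<one>}" using generate_sub genG by auto
  then show False using infG finite_subset by blast
qed

lemma x_inf: assumes X: "X = {x}" and p: "x [^] (p::nat) = \<one>" shows "p = 0"
proof (rule ccontr)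
  assume "p \<noteq> 0"
  then have pp: "p > 0" by simp
  have xc: "x \<in> carrier G" using XG X by auto
  have Qz: "lett G z [^] p = \<one>" if "z \<in> letters X" for z
    using that X p xc by (cases z) (auto simp: letters_def lett_def nat_pow_inv)
  have M: "card (proj G ` Sph X m) \<le> 2" for m
  proof -
    have "Sph X m \<subseteq> {replicate m (True, x), replicate m (False, x)}"
    proof
      fix w assume "w \<in> Sph X m"
      then have "w \<in> free_words {x}" "length w = m" using X by (auto simp: Sph_def)
      then show "w \<in> {replicate m (True, x), replicate m (False, x)}" using single_words[of w x] by auto
    qed
    then have "proj G ` Sph X m \<subseteq> proj G ` {replicate m (True, x), replicate m (False, x)}" by blast
    then have "card (proj G ` Sph X m) \<le> card (proj G ` {replicate m (True, x), replicate m (False, x)})"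
      by (rule card_mono[rotated]) simp
    also have "\<dots> \<le> card {replicate m (True, x), replicate m (False, x)}" by (rule card_image_le) simp
    also have "\<dots> \<le> 2" by (simp add: card_insert_if)
    finally show ?thesis .
  qed
  have z0: "(True, x) \<in> letters X" using X by (simp add: letters_def)
  have "finite (proj G ` free_words X)" using finite_image_A[OF pp Qz M z0] by blast
  moreover have "carrier G \<subseteq> proj G ` free_words X" using generate_sub genG by simp
  ultimately show False using infG finite_subset by blast
qed

lemma lett_inj: assumes X: "X = {x}" and eq: "lett G (b, x) [^] (i::nat) = lett G (b, x) [^] (i'::nat)"
  shows "i = i'"
proof -
  have xc: "x \<in> carrier G" using XG X by auto
  let ?c = "lett G (b, x)"
  have cc: "?c \<in> carrier G" using xc by (simp add: lett_def)
  have one: "?c [^] d = \<one> \<Longrightarrow> d = 0" for d :: nat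
  proof -
    assume "?c [^] d = \<one>"
    then have "x [^] d = \<one>" using xc by (cases b) (auto simp: lett_def nat_pow_inv)
    then show "d = 0" using x_inf[OF X] by blast
  qed
  have key: "i = i'" if "i \<le> i'" "?c [^] i = ?c [^] i'" for i i' :: nat
  proof -
    have "?c [^] i' = ?c [^] i \<otimes> ?c [^] (i' - i)" using that(1) cc by (simp add: nat_pow_mult)
    then have "?c [^] i \<otimes> ?c [^] (i' - i) = ?c [^] i" using that by simp
    then have "?c [^] (i' - i) = \<one>" using cc by simp
    then show ?thesis using one that by fastforce
  qed
  show ?thesis
  proof (cases "i \<le> i'")
    case True then show ?thesis using key eq by blast
  next
    case False then show ?thesis using key[of i' i] eq by simp
  qed
qed

lemma fiber_le2: assumes X: "X = {x}" and h: "h \<in> carrier G"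
  shows "card {w \<in> fball X n. proj G w = h} \<le> 2"
proof -
  let ?F = "{w \<in> fball X n. proj G w = h}"
  define F where "F b = {w \<in> ?F. w = replicate (length w) (b, x)}" for b
  have sub: "?F \<subseteq> F True \<union> F False"
    using single_words[of _ x] X by (auto simp: F_def fball_def)
  have fin: "finite (F b)" for b
    by (rule finite_subset[of _ "fball X n"]) (auto simp: F_def finite_fball finX)
  have le1: "card (F b) \<le> 1" for b
  proof -
    have bL: "(b, x) \<in> letters X" using X by (simp add: letters_def)
    have pr: "proj G (replicate r (b, x)) = lett G (b, x) [^] r" for r
      using proj_replicate[OF bL, of "[]" r] bL by simp
    have "\<forall>w\<in>F b. \<forall>w'\<in>F b. w = w'"
    proof (intro ballI)
      fix w w' assume w: "w \<in> F b" and w': "w' \<in> F b"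
      have "lett G (b, x) [^] length w = lett G (b, x) [^] length w'"
        using w w' pr unfolding F_def by (metis (mono_tags, lifting) mem_Collect_eq)
      then have "length w = length w'" using lett_inj[OF X] by blast
      then show "w = w'" using w w' unfolding F_def by (metis (mono_tags, lifting) mem_Collect_eq)
    qed
    then show ?thesis using card_le_Suc0_iff_eq[OF fin] by simp
  qed
  have "card ?F \<le> card (F True \<union> F False)" by (rule card_mono) (use fin sub in auto)
  also have "\<dots> \<le> card (F True) + card (F False)" by (rule card_Un_le)
  also have "\<dots> \<le> 2" using le1[of True] le1[of False] by simp
  finally show ?thesis .
qed

lemma card_fball_ge: "card (fball X n) \<ge> Suc n"
proof -
  obtain x where x: "x \<in> X" using X_ne by blast
  have "(\<lambda>i. replicate i (True, x)) ` {..n} \<subseteq> fball X n"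
    using x reduced_replicate1 by (auto simp: fball_def free_words_def)
  moreover have "inj_on (\<lambda>i. replicate i (True, x)) {..n}" by (auto simp: inj_on_def)
  ultimately have "card ((\<lambda>i. replicate i (True, x)) ` {..n}) \<le> card (fball X n)"
    by (intro card_mono) (auto simp: finite_fball finX)
  then show ?thesis using \<open>inj_on _ _\<close> by (simp add: card_image)
qed

lemma fiber_small: assumes eps: "\<epsilon> > 0"
  shows "\<exists>N0. \<forall>n\<ge>N0. \<forall>h\<in>carrier G. real (card {w \<in> fball X n. proj G w = h}) \<le> \<epsilon> * real (card (fball X n))"
proof (cases "card X \<ge> 2")
  case True
  interpret fgp2 G X by unfold_locales (use True infG genG in auto)
  obtain L0 where L0: "\<And>n h. h \<in> carrier G \<Longrightarrow> real (card {w \<in> fball X n. proj G w = h}) \<le> real (card (fball X L0)) + \<epsilon> / 2 * real (card (fball X n))"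
    using ball_bound[of "\<epsilon> / 2"] eps by auto
  define C where "C = real (card (fball X L0))"
  define N0 where "N0 = nat \<lceil>2 * C / \<epsilon>\<rceil>"
  have "real (card {w \<in> fball X n. proj G w = h}) \<le> \<epsilon> * real (card (fball X n))"
    if n: "n \<ge> N0" and h: "h \<in> carrier G" for n h
  proof -
    have "2 * C / \<epsilon> \<le> real N0" unfolding N0_def by (rule real_nat_ceiling_ge)
    also have "\<dots> \<le> real (card (fball X n))" using n card_fball_ge[of n] by simp
    finally have "2 * C \<le> \<epsilon> * real (card (fball X n))" using eps by (simp add: field_simps)
    then show ?thesis using L0[OF h, of n] unfolding C_def by simp
  qed
  then show ?thesis by blast
next
  case False
  have "card X \<noteq> 0" using X_ne finX by simp
  then have "card X = 1" using False by linarith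
  then obtain x where X: "X = {x}" using card_1_singletonE by blast
  define N0 where "N0 = nat \<lceil>2 / \<epsilon>\<rceil>"
  have "real (card {w \<in> fball X n. proj G w = h}) \<le> \<epsilon> * real (card (fball X n))"
    if n: "n \<ge> N0" and h: "h \<in> carrier G" for n h
  proof -
    have "2 / \<epsilon> \<le> real N0" unfolding N0_def by (rule real_nat_ceiling_ge)
    also have "\<dots> \<le> real (card (fball X n))" using n card_fball_ge[of n] by simp
    finally have "2 \<le> \<epsilon> * real (card (fball X n))" using eps by (simp add: field_simps)
    then show ?thesis using fiber_le2[OF X h, of n] by linarith
  qed
  then show ?thesis by blast
qed

lemma kernel_count: assumes om: "\<omega> \<in> free_words X"
  shows "card (proj_kernel G X \<inter> fmult \<omega> ` fball X n) \<le> card {w \<in> fball X n. proj G w = inv (proj G \<omega>)}"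
proof -
  have omL: "set \<omega> \<subseteq> letters X" using om by (simp add: free_words_iff)
  have sub: "proj_kernel G X \<inter> fmult \<omega> ` fball X n \<subseteq> fmult \<omega> ` {w \<in> fball X n. proj G w = inv (proj G \<omega>)}"
  proof
    fix v assume "v \<in> proj_kernel G X \<inter> fmult \<omega> ` fball X n"
    then obtain w where w: "w \<in> fball X n" "v = fmult \<omega> w" "proj G v = \<one>"
      by (auto simp: proj_kernel_def)
    have wL: "set w \<subseteq> letters X" using w by (auto simp: fball_def free_words_iff)
    have "proj G \<omega> \<otimes> proj G w = \<one>" using w proj_fmult[OF omL wL] by simp
    then have "proj G w = inv (proj G \<omega>)"
      using inv_solve_left[of "proj G w" "proj G \<omega>" \<one>] omL wL by simp
    then show "v \<in> fmult \<omega> ` {w \<in> fball X n. proj G w = inv (proj G \<omega>)}" using w by auto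
  qed
  have "card (proj_kernel G X \<inter> fmult \<omega> ` fball X n) \<le> card (fmult \<omega> ` {w \<in> fball X n. proj G w = inv (proj G \<omega>)})"
    by (rule card_mono[OF _ sub]) (simp add: finite_fball finX)
  also have "\<dots> \<le> card {w \<in> fball X n. proj G w = inv (proj G \<omega>)}"
    by (rule card_image_le) (simp add: finite_fball finX)
  finally show ?thesis .
qed

end

theorem theorem2p5:
  fixes G :: "('a, 'b) monoid_scheme" and X :: "'a set"
  assumes "group G"
    and "infinite (carrier G)"
    and "finite X"
    and "X \<subseteq> carrier G"
    and "generate G X = carrier G"
  shows "upper_density X (proj_kernel G X) = 0"
proof -
  interpret fgp1 G X
    unfolding fgp1_def fgp_def fgp1_axioms_def fgp_axioms_def using assms by auto
  define a where "a n = (SUP \<omega>\<in>free_words X.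
      ereal (real (card (proj_kernel G X \<inter> fmult \<omega> ` fball X n)) / real (card (fball X n))))" for n
  have nonneg: "0 \<le> a n" for n
    unfolding a_def by (rule SUP_upper2[of "[]"]) (auto simp: free_words_def)
  have ev: "eventually (\<lambda>n. a n \<le> ereal \<epsilon>) sequentially" if eps: "\<epsilon> > 0" for \<epsilon>
  proof -
    obtain N0 where N0: "\<And>n h. n \<ge> N0 \<Longrightarrow> h \<in> carrier G \<Longrightarrow> real (card {w \<in> fball X n. proj G w = h}) \<le> \<epsilon> * real (card (fball X n))"
      using fiber_small[OF eps] by blast
    have "a n \<le> ereal \<epsilon>" if n: "n \<ge> N0" for n
      unfolding a_def
    proof (rule SUP_least)
      fix \<omega> assume om: "\<omega> \<in> free_words X"
      have pc: "inv\<^bsub>G\<^esub> (proj G \<omega>) \<in> carrier G" using om by (simp add: free_words_iff)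
      have "real (card (proj_kernel G X \<inter> fmult \<omega> ` fball X n)) \<le> \<epsilon> * real (card (fball X n))"
        using kernel_count[OF om, of n] N0[OF n pc] by linarith
      moreover have "real (card (fball X n)) > 0" using card_fball_ge[of n] by simp
      ultimately show "ereal (real (card (proj_kernel G X \<inter> fmult \<omega> ` fball X n)) / real (card (fball X n))) \<le> ereal \<epsilon>"
        by (simp add: divide_le_eq)
    qed
    then show ?thesis by (auto simp: eventually_sequentially)
  qed
  have up: "limsup a \<le> 0"
  proof (rule ereal_le_epsilon2)
    fix e :: real assume "0 < e"
    then show "limsup a \<le> 0 + ereal e" using Limsup_bounded[OF ev] by simp
  qed
  have "0 \<le> liminf a" by (rule Liminf_bounded) (simp add: nonneg)
  also have "liminf a \<le> limsup a" by (rule Liminf_le_Limsup) simp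
  finally have "0 \<le> limsup a" .
  with up have "limsup a = 0" by simp
  then show ?thesis unfolding upper_density_def a_def .
qed


end
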